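(* Let $k$ be a field of characteristic different from $2$ and let $\alpha\in k^\times$. There exist positive integers $a,b$ such that $a\langle 1\rangle = b\langle 2,2\alpha\rangle$ in $GW(k)$ if and only if $\alpha$ is a sum of squares in $k^\times$.
   Context: $GW(k)$ is the Grothendieck–Witt ring of $k$, generated as an abelian group by the one-dimensional quadratic forms $\langle a\rangle$, $a\in k^\times/(k^\times)^2$, with $\langle a\rangle+\langle b\rangle=\langle a,b\rangle$ (orthogonal sum) and $\langle a\rangle\langle b\rangle=\langle ab\rangle$. "$\alpha$ is a sum of squares in $k^\times$" means $\alpha=x_1^2+\cdots+x_m^2$ for some $m\ge1$ and $x_i\in k^\times$. *)

theory Defs
  imports Main
begin

text \<open>Diagonal quadratic forms over a field: a list of coefficients [a_0,...,a_{n-1}]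
 represents the form x \<mapsto> sum a_i x_i^2 on k^n (vectors are functions nat \<Rightarrow> k,
 only indices < n matter).\<close>

definition diag_qf :: "'a::field list \<Rightarrow> (nat \<Rightarrow> 'a) \<Rightarrow> 'a" where
  "diag_qf as x = (\<Sum>i<length as. as ! i * (x i)^2)"

definition mat_apply :: "nat \<Rightarrow> (nat \<Rightarrow> nat \<Rightarrow> 'a::field) \<Rightarrow> (nat \<Rightarrow> 'a) \<Rightarrow> (nat \<Rightarrow> 'a)" where
  "mat_apply n M x = (\<lambda>i. \<Sum>j<n. M i j * x j)"

definition mat_invertible :: "nat \<Rightarrow> (nat \<Rightarrow> nat \<Rightarrow> 'a::field) \<Rightarrow> bool" where
  "mat_invertible n M \<longleftrightarrow> (\<exists>N. \<forall>i<n. \<forall>j<n.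
      (\<Sum>l<n. M i l * N l j) = (if i = j then 1 else 0) \<and>
      (\<Sum>l<n. N i l * M l j) = (if i = j then 1 else 0))"

definition isometric :: "'a::field list \<Rightarrow> 'a list \<Rightarrow> bool" where
  "isometric as bs \<longleftrightarrow> length as = length bs \<and>
     (\<exists>M. mat_invertible (length as) M \<and>
        (\<forall>x. diag_qf bs (mat_apply (length as) M x) = diag_qf as x))"

text \<open>Equality of the classes of two nondegenerate diagonal forms in GW(k), the Grothendieck
 group of the monoid of isometry classes under orthogonal sum (every nondegenerate form is
 diagonalizable in characteristic \<noteq> 2): [q1] = [q2] iff q1 \<perp> r \<cong> q2 \<perp> r for some r.\<close>
definition gw_eq :: "'a::field list \<Rightarrow> 'a list \<Rightarrow> bool" where
  "gw_eq as bs \<longleftrightarrow> (\<exists>cs. (\<forall>c\<in>set cs. c \<noteq> 0) \<and> isometric (as @ cs) (bs @ cs))"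

definition sum_of_squares :: "'a::field \<Rightarrow> bool" where
  "sum_of_squares \<alpha> \<longleftrightarrow> (\<exists>xs. xs \<noteq> [] \<and> (\<forall>x\<in>set xs. x \<noteq> 0) \<and>
      \<alpha> = sum_list (map (\<lambda>x. x^2) xs))"

end

theory Submission
  imports Defs "HOL-Combinatorics.Permutations"
begin


definition mmul :: "nat \<Rightarrow> (nat \<Rightarrow> nat \<Rightarrow> 'a::field) \<Rightarrow> (nat \<Rightarrow> nat \<Rightarrow> 'a) \<Rightarrow> nat \<Rightarrow> nat \<Rightarrow> 'a" where
  "mmul n M N = (\<lambda>i j. \<Sum>l<n. M i l * N l j)"

lemma mat_apply_comp: "mat_apply n M (mat_apply n N x) = mat_apply n (mmul n M N) x"
  unfolding mat_apply_def mmul_def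
  by (auto simp: fun_eq_iff sum_distrib_left sum_distrib_right mult.assoc intro: sum.swap)

lemma mat_apply_cong: "(\<And>j. j < n \<Longrightarrow> x j = y j) \<Longrightarrow> mat_apply n M x = mat_apply n M y"
  unfolding mat_apply_def by (auto intro!: sum.cong)

lemma diag_qf_cong: "(\<And>j. j < length as \<Longrightarrow> x j = y j) \<Longrightarrow> diag_qf as x = diag_qf as y"
  unfolding diag_qf_def by (auto intro!: sum.cong)

lemma mat_apply_unit: "j < n \<Longrightarrow> mat_apply n M (\<lambda>l. if l = j then 1 else 0) i = M i j"
  unfolding mat_apply_def by (simp add: if_distrib cong: if_cong)

lemma mat_apply_id: "i < n \<Longrightarrow> mat_apply n (\<lambda>i j. if i = j then 1 else 0) x i = x i"
proof -
  assume "i < n"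
  have "(\<Sum>j<n. (if i = j then 1 else 0) * x j) = (\<Sum>j<n. if i = j then x j else 0)"
    by (rule sum.cong) auto
  also have "\<dots> = x i" using \<open>i < n\<close> by simp
  finally show ?thesis unfolding mat_apply_def .
qed

lemma mat_invertible_iff:
  "mat_invertible n M \<longleftrightarrow> (\<exists>N. (\<forall>x. \<forall>i<n. mat_apply n M (mat_apply n N x) i = x i) \<and>
                                 (\<forall>x. \<forall>i<n. mat_apply n N (mat_apply n M x) i = x i))"
proof
  assume "mat_invertible n M"
  then obtain N where N: "\<forall>i<n. \<forall>j<n. mmul n M N i j = (if i = j then 1 else 0) \<and> mmul n N M i j = (if i = j then 1 else 0)"
    unfolding mat_invertible_def mmul_def by blast
  have "mat_apply n (mmul n M N) x i = x i" if "i < n" for x i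
  proof -
    have "mat_apply n (mmul n M N) x i = mat_apply n (\<lambda>i j. if i = j then 1 else 0) x i"
      unfolding mat_apply_def using N that by (auto intro!: sum.cong)
    then show ?thesis using mat_apply_id[OF that] by simp
  qed
  moreover have "mat_apply n (mmul n N M) x i = x i" if "i < n" for x i
  proof -
    have "mat_apply n (mmul n N M) x i = mat_apply n (\<lambda>i j. if i = j then 1 else 0) x i"
      unfolding mat_apply_def using N that by (auto intro!: sum.cong)
    then show ?thesis using mat_apply_id[OF that] by simp
  qed
  ultimately show "\<exists>N. (\<forall>x. \<forall>i<n. mat_apply n M (mat_apply n N x) i = x i) \<and>
                                 (\<forall>x. \<forall>i<n. mat_apply n N (mat_apply n M x) i = x i)"
    by (intro exI[of _ N]) (auto simp: mat_apply_comp)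
next
  assume "\<exists>N. (\<forall>x. \<forall>i<n. mat_apply n M (mat_apply n N x) i = x i) \<and>
                                 (\<forall>x. \<forall>i<n. mat_apply n N (mat_apply n M x) i = x i)"
  then obtain N where N1: "\<And>x i. i < n \<Longrightarrow> mat_apply n M (mat_apply n N x) i = x i"
     and N2: "\<And>x i. i < n \<Longrightarrow> mat_apply n N (mat_apply n M x) i = x i" by blast
  have "mmul n M N i j = (if i = j then 1 else 0)" if "i < n" "j < n" for i j
    using N1[of i "\<lambda>l. if l = j then 1 else 0"] that
    by (simp add: mat_apply_comp mat_apply_unit)
  moreover have "mmul n N M i j = (if i = j then 1 else 0)" if "i < n" "j < n" for i j
    using N2[of i "\<lambda>l. if l = j then 1 else 0"] that
    by (simp add: mat_apply_comp mat_apply_unit)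
  ultimately show "mat_invertible n M" unfolding mat_invertible_def mmul_def by blast
qed



lemma isometric_I:
  assumes "length as = length bs"
    and "\<And>x i. i < length as \<Longrightarrow> mat_apply (length as) M (mat_apply (length as) N x) i = x i"
    and "\<And>x i. i < length as \<Longrightarrow> mat_apply (length as) N (mat_apply (length as) M x) i = x i"
    and "\<And>x. diag_qf bs (mat_apply (length as) M x) = diag_qf as x"
  shows "isometric as bs"
  unfolding isometric_def mat_invertible_iff using assms by blast

lemma isometric_E:
  assumes "isometric as bs"
  obtains M N where "length as = length bs"
    and "\<And>x i. i < length as \<Longrightarrow> mat_apply (length as) M (mat_apply (length as) N x) i = x i"
    and "\<And>x i. i < length as \<Longrightarrow> mat_apply (length as) N (mat_apply (length as) M x) i = x i"
    and "\<And>x. diag_qf bs (mat_apply (length as) M x) = diag_qf as x"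
  using assms unfolding isometric_def mat_invertible_iff by blast

lemma isometric_sym: assumes "isometric as bs" shows "isometric bs as"
proof -
  obtain M N where L: "length as = length bs"
    and 1: "\<And>x i. i < length as \<Longrightarrow> mat_apply (length as) M (mat_apply (length as) N x) i = x i"
    and 2: "\<And>x i. i < length as \<Longrightarrow> mat_apply (length as) N (mat_apply (length as) M x) i = x i"
    and 3: "\<And>x. diag_qf bs (mat_apply (length as) M x) = diag_qf as x"
    using isometric_E[OF assms] by blast
  have d: "diag_qf as (mat_apply (length bs) N x) = diag_qf bs x" for x
  proof -
    have "diag_qf as (mat_apply (length bs) N x) = diag_qf bs (mat_apply (length as) M (mat_apply (length as) N x))"
      using 3 L by simp
    also have "\<dots> = diag_qf bs x" using 1 L by (intro diag_qf_cong) auto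
    finally show ?thesis .
  qed
  show ?thesis
    by (rule isometric_I[where M=N and N=M]) (use 1 2 L d in auto)
qed

lemma isometric_trans: assumes "isometric as bs" "isometric bs cs" shows "isometric as cs"
proof -
  define n where "n = length as"
  obtain M N where L: "length bs = n"
    and 1: "\<And>x i. i < n \<Longrightarrow> mat_apply n M (mat_apply n N x) i = x i"
    and 2: "\<And>x i. i < n \<Longrightarrow> mat_apply n N (mat_apply n M x) i = x i"
    and 3: "\<And>x. diag_qf bs (mat_apply n M x) = diag_qf as x"
    using isometric_E[OF assms(1)] unfolding n_def by metis
  obtain M' N' where L': "length cs = n"
    and b1: "\<And>x i. i < n \<Longrightarrow> mat_apply n M' (mat_apply n N' x) i = x i"
    and b2: "\<And>x i. i < n \<Longrightarrow> mat_apply n N' (mat_apply n M' x) i = x i"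
    and b3: "\<And>x. diag_qf cs (mat_apply n M' x) = diag_qf bs x"
    using isometric_E[OF assms(2)] L by metis
  have e1: "mat_apply n M' (mat_apply n M (mat_apply n N y)) = mat_apply n M' y" for y
    by (rule mat_apply_cong) (rule 1)
  have e2: "mat_apply n N (mat_apply n N' (mat_apply n M' y)) = mat_apply n N y" for y
    by (rule mat_apply_cong) (rule b2)
  show ?thesis
  proof (rule isometric_I[where M="mmul n M' M" and N="mmul n N N'"])
    show "length as = length cs" using L' n_def by simp
    fix x i assume i: "i < length as"
    show "mat_apply (length as) (mmul n M' M) (mat_apply (length as) (mmul n N N') x) i = x i"
      unfolding n_def[symmetric] mat_apply_comp[symmetric] e1 using b1 i n_def by simp
    show "mat_apply (length as) (mmul n N N') (mat_apply (length as) (mmul n M' M) x) i = x i"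
      unfolding n_def[symmetric] mat_apply_comp[symmetric] e2 using 2 i n_def by simp
  next
    fix x show "diag_qf cs (mat_apply (length as) (mmul n M' M) x) = diag_qf as x"
      unfolding n_def[symmetric] mat_apply_comp[symmetric] using 3 b3 by simp
  qed
qed

lemma isometric_scale: assumes "isometric as bs" shows "isometric (map ((*) c) as) (map ((*) c) bs)"
proof -
  obtain M N where L: "length as = length bs"
    and 1: "\<And>x i. i < length as \<Longrightarrow> mat_apply (length as) M (mat_apply (length as) N x) i = x i"
    and 2: "\<And>x i. i < length as \<Longrightarrow> mat_apply (length as) N (mat_apply (length as) M x) i = x i"
    and 3: "\<And>x. diag_qf bs (mat_apply (length as) M x) = diag_qf as x"
    using isometric_E[OF assms] by blast
  have sc: "diag_qf (map ((*) c) ds) y = c * diag_qf ds y" for ds y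
    unfolding diag_qf_def by (simp add: sum_distrib_left mult.assoc)
  show ?thesis
    by (rule isometric_I[where M=M and N=N]) (use 1 2 3 L in \<open>auto simp: sc\<close>)
qed

lemma isometric_perm:
  assumes p: "p permutes {..<length bs}"
  shows "isometric bs (permute_list p bs)"
proof -
  define n where "n = length bs"
  define M where "M = (\<lambda>i j. if j = p i then 1 else (0::'a))"
  define N where "N = (\<lambda>i j. if j = inv p i then 1 else (0::'a))"
  have pn: "\<And>i. i < n \<Longrightarrow> p i < n" and ipn: "\<And>i. i < n \<Longrightarrow> inv p i < n"
    using permutes_in_image[OF p] permutes_in_image[OF permutes_inv[OF p]] n_def by auto
  have AM: "mat_apply n M x i = x (p i)" if "i < n" for x i
    using mat_apply_unit pn[OF that] unfolding M_def mat_apply_def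
  proof -
    have "(\<Sum>j<n. (if j = p i then 1 else 0) * x j) = (\<Sum>j<n. if j = p i then x j else 0)"
      by (rule sum.cong) auto
    also have "\<dots> = x (p i)" using pn[OF that] by simp
    finally show "(\<Sum>j<n. (if j = p i then 1 else 0) * x j) = x (p i)" .
  qed
  have AN: "mat_apply n N x i = x (inv p i)" if "i < n" for x i
    unfolding N_def mat_apply_def
  proof -
    have "(\<Sum>j<n. (if j = inv p i then 1 else 0) * x j) = (\<Sum>j<n. if j = inv p i then x j else 0)"
      by (rule sum.cong) auto
    also have "\<dots> = x (inv p i)" using ipn[OF that] by simp
    finally show "(\<Sum>j<n. (if j = inv p i then 1 else 0) * x j) = x (inv p i)" .
  qed
  show ?thesis
  proof (rule isometric_I[where M=M and N=N], unfold n_def[symmetric])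
    show "n = length (permute_list p bs)" using n_def by simp
    fix x i assume "i < n"
    then show "mat_apply n M (mat_apply n N x) i = x i"
      by (simp only: AM AN pn permutes_inverses[OF p])
    show "mat_apply n N (mat_apply n M x) i = x i"
      using \<open>i < n\<close> by (simp only: AM AN ipn permutes_inverses[OF p])
  next
    fix x
    have "diag_qf (permute_list p bs) (mat_apply n M x) = (\<Sum>i<n. bs ! p i * (x (p i))^2)"
      unfolding diag_qf_def using AM permute_list_nth[OF p] n_def by (auto intro!: sum.cong)
    also have "\<dots> = (\<Sum>i<n. bs ! i * (x i)^2)"
      using sum.reindex_bij_betw[OF permutes_imp_bij[OF p], of "\<lambda>i. bs ! i * (x i)^2"] n_def by simp
    finally show "diag_qf (permute_list p bs) (mat_apply n M x) = diag_qf bs x"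
      unfolding diag_qf_def n_def .
  qed
qed

lemma isometric_mset: assumes "mset as = mset bs" shows "isometric as bs"
proof -
  obtain p where "p permutes {..<length bs}" "permute_list p bs = as"
    using mset_eq_permutation[OF assms] by blast
  then show ?thesis using isometric_perm isometric_sym by metis
qed

lemma isometric_refl: "isometric as as"
  by (rule isometric_mset) simp



lemma sum_split: "(\<Sum>i<(m::nat)+k. f i) = (\<Sum>i<m. f i) + (\<Sum>i<k. f (m+i))"
  by (induction k) (simp_all add: add.assoc)

lemma diag_qf_append: "diag_qf (as@cs) y = diag_qf as y + diag_qf cs (\<lambda>i. y (length as + i))"
  unfolding diag_qf_def by (simp add: sum_split nth_append)

definition blk :: "nat \<Rightarrow> (nat \<Rightarrow> nat \<Rightarrow> 'a::field) \<Rightarrow> (nat \<Rightarrow> nat \<Rightarrow> 'a) \<Rightarrow> nat \<Rightarrow> nat \<Rightarrow> 'a" where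
  "blk m M1 M2 = (\<lambda>i j. if i < m then (if j < m then M1 i j else 0) else (if j < m then 0 else M2 (i-m) (j-m)))"

lemma blk_apply1: "i < m \<Longrightarrow> mat_apply (m+k) (blk m M1 M2) x i = mat_apply m M1 x i"
  unfolding mat_apply_def blk_def by (simp add: sum_split)

lemma blk_apply2: "mat_apply (m+k) (blk m M1 M2) x (m+i) = mat_apply k M2 (\<lambda>j. x (m+j)) i"
  unfolding mat_apply_def blk_def by (simp add: sum_split)

lemma blk_inv:
  assumes "\<And>x i. i < m \<Longrightarrow> mat_apply m M1 (mat_apply m N1 x) i = x i"
    and "\<And>x i. i < k \<Longrightarrow> mat_apply k M2 (mat_apply k N2 x) i = x i"
    and "i < m + k"
  shows "mat_apply (m+k) (blk m M1 M2) (mat_apply (m+k) (blk m N1 N2) x) i = x i"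
proof (cases "i < m")
  case True
  have "mat_apply (m+k) (blk m M1 M2) (mat_apply (m+k) (blk m N1 N2) x) i
     = mat_apply m M1 (mat_apply (m+k) (blk m N1 N2) x) i" using True by (rule blk_apply1)
  also have "\<dots> = mat_apply m M1 (mat_apply m N1 x) i"
    by (rule arg_cong[where f="\<lambda>y. y i"], rule mat_apply_cong) (simp add: blk_apply1)
  also have "\<dots> = x i" using assms(1) True by simp
  finally show ?thesis .
next
  case False
  then obtain i' where i': "i = m + i'" "i' < k" using assms(3) by (metis add_less_cancel_left le_Suc_ex not_less)
  have "mat_apply (m+k) (blk m M1 M2) (mat_apply (m+k) (blk m N1 N2) x) i
     = mat_apply k M2 (\<lambda>j. mat_apply (m+k) (blk m N1 N2) x (m+j)) i'" unfolding i' by (rule blk_apply2)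
  also have "\<dots> = mat_apply k M2 (mat_apply k N2 (\<lambda>j. x (m+j))) i'"
    by (simp only: blk_apply2)
  also have "\<dots> = x i" using assms(2) i' by simp
  finally show ?thesis .
qed

lemma isometric_append:
  assumes "isometric as bs" "isometric cs ds"
  shows "isometric (as@cs) (bs@ds)"
proof -
  define m where "m = length as"
  define k where "k = length cs"
  obtain M1 N1 where L1: "length bs = m"
    and a1: "\<And>x i. i < m \<Longrightarrow> mat_apply m M1 (mat_apply m N1 x) i = x i"
    and a2: "\<And>x i. i < m \<Longrightarrow> mat_apply m N1 (mat_apply m M1 x) i = x i"
    and a3: "\<And>x. diag_qf bs (mat_apply m M1 x) = diag_qf as x"
    using isometric_E[OF assms(1)] unfolding m_def by metis
  obtain M2 N2 where L2: "length ds = k"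
    and b1: "\<And>x i. i < k \<Longrightarrow> mat_apply k M2 (mat_apply k N2 x) i = x i"
    and b2: "\<And>x i. i < k \<Longrightarrow> mat_apply k N2 (mat_apply k M2 x) i = x i"
    and b3: "\<And>x. diag_qf ds (mat_apply k M2 x) = diag_qf cs x"
    using isometric_E[OF assms(2)] unfolding k_def by metis
  have len: "length (as@cs) = m + k" using m_def k_def by simp
  have d: "diag_qf (bs@ds) (mat_apply (m+k) (blk m M1 M2) x) = diag_qf (as@cs) x" for x
  proof -
    have "diag_qf (bs@ds) (mat_apply (m+k) (blk m M1 M2) x)
      = diag_qf bs (mat_apply (m+k) (blk m M1 M2) x) + diag_qf ds (\<lambda>i. mat_apply (m+k) (blk m M1 M2) x (m + i))"
      using diag_qf_append L1 by metis
    also have "\<dots> = diag_qf bs (mat_apply m M1 x) + diag_qf ds (mat_apply k M2 (\<lambda>j. x (m+j)))"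
      by (subst diag_qf_cong[where y="mat_apply m M1 x"]) (auto simp: L1 blk_apply1 blk_apply2)
    also have "\<dots> = diag_qf (as@cs) x" using a3 b3 diag_qf_append m_def by metis
    finally show ?thesis .
  qed
  show ?thesis
    by (rule isometric_I[where M="blk m M1 M2" and N="blk m N1 N2"], unfold len)
       (use L1 L2 len d blk_inv[OF a1 b1] blk_inv[OF a2 b2] in auto)
qed

lemma isometric_iso2:
  assumes "\<And>x y. s * (p*x + q*y)^2 + t * (r*x + w*y)^2 = u * x^2 + v * y^2"
    and "\<And>x y. p * (p'*x + q'*y) + q * (r'*x + w'*y) = x"
    and "\<And>x y. r * (p'*x + q'*y) + w * (r'*x + w'*y) = y"
    and "\<And>x y. p' * (p*x + q*y) + q' * (r*x + w*y) = x"
    and "\<And>x y. r' * (p*x + q*y) + w' * (r*x + w*y) = y"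
  shows "isometric [u, v] [s, t]"
proof -
  define M where "M = (\<lambda>(i::nat) (j::nat). if i = 0 then (if j = 0 then p else q) else (if j = 0 then r else w))"
  define N where "N = (\<lambda>(i::nat) (j::nat). if i = 0 then (if j = 0 then p' else q') else (if j = 0 then r' else w'))"
  have two: "{..<Suc (Suc 0)} = {0,1}" by auto
  have AM: "mat_apply (Suc (Suc 0)) M x = (\<lambda>i. if i = 0 then p * x 0 + q * x 1 else r * x 0 + w * x 1)" for x
    unfolding mat_apply_def M_def two by auto
  have AN: "mat_apply (Suc (Suc 0)) N x = (\<lambda>i. if i = 0 then p' * x 0 + q' * x 1 else r' * x 0 + w' * x 1)" for x
    unfolding mat_apply_def N_def two by auto
  have dq: "diag_qf [a, b] x = a * (x 0)^2 + b * (x 1)^2" for a b x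
    unfolding diag_qf_def two by simp
  show ?thesis
    by (rule isometric_I[where M=M and N=N]) (auto simp: AM AN dq assms less_Suc_eq)
qed



lemmas [trans] = isometric_trans

lemma iso_rep_pair: "isometric [u,v] [s,t] \<Longrightarrow> isometric (concat (replicate m [u,v])) (concat (replicate m [s,t]))"
proof (induction m)
  case 0 then show ?case by (simp add: isometric_refl)
next
  case (Suc m)
  then have "isometric ([u,v] @ concat (replicate m [u,v])) ([s,t] @ concat (replicate m [s,t]))"
    by (intro isometric_append) auto
  then show ?case by simp
qed

lemma mset_pairs: "mset (concat (replicate m [a,b])) = mset (replicate m a @ replicate m b)"
  by (induction m) auto

lemma iso_u_v:
  fixes u v :: "'a::field"
  assumes "u + v \<noteq> 0"
  shows "isometric [u,v] [u+v, u*v*(u+v)]"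
proof (rule isometric_iso2[where p="u/(u+v)" and q="v/(u+v)" and r="1/(u+v)" and w="-1/(u+v)"
        and p'=1 and q'=v and r'=1 and w'="-u"])
  fix x y :: 'a
  show "(u + v) * (u / (u + v) * x + v / (u + v) * y)\<^sup>2 + u * v * (u + v) * (1 / (u + v) * x + - 1 / (u + v) * y)\<^sup>2 =
           u * x\<^sup>2 + v * y\<^sup>2"
  proof -
    define d where "d = u + v"
    have d0: "d \<noteq> 0" using assms d_def by simp
    have e1: "u / d * x + v / d * y = (u*x+v*y)/d" by (simp add: add_divide_distrib)
    have e2: "1 / d * x + - 1 / d * y = (x-y)/d" using d0 by (simp add: field_simps)
    have e3: "(u*x+v*y)^2 + u*v*(x-y)^2 = d*(u*x^2+v*y^2)" unfolding d_def power2_eq_square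
      by (simp add: algebra_simps)
    have "d * ((u*x+v*y)/d)^2 + u*v*d*((x-y)/d)^2 = ((u*x+v*y)^2 + u*v*(x-y)^2)/d"
      using d0 by (simp add: power_divide field_simps power2_eq_square)
    also have "\<dots> = u*x^2+v*y^2" unfolding e3 using d0 by simp
    finally show ?thesis unfolding e1 e2 d_def[symmetric] .
  qed
  show "u / (u + v) * (1 * x + v * y) + v / (u + v) * (1 * x + - u * y) = x"
  proof -
    have "u / (u + v) * (1 * x + v * y) + v / (u + v) * (1 * x + - u * y) = (u * (x + v * y) + v * (x - u * y)) / (u+v)"
      by (simp add: add_divide_distrib diff_divide_distrib algebra_simps)
    also have "u * (x + v * y) + v * (x - u * y) = (u+v) * x" by (simp add: algebra_simps)
    finally show ?thesis using assms by simp
  qed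
  show "1 / (u + v) * (1 * x + v * y) + - 1 / (u + v) * (1 * x + - u * y) = y"
  proof -
    have "1 / (u + v) * (1 * x + v * y) + - 1 / (u + v) * (1 * x + - u * y) = ((x + v * y) - (x - u * y)) / (u+v)"
      by (simp add: add_divide_distrib diff_divide_distrib algebra_simps)
    also have "(x + v * y) - (x - u * y) = (u+v) * y" by (simp add: algebra_simps)
    finally show ?thesis using assms by simp
  qed
  show "1 * (u / (u + v) * x + v / (u + v) * y) + v * (1 / (u + v) * x + - 1 / (u + v) * y) = x"
  proof -
    have "1 * (u / (u + v) * x + v / (u + v) * y) + v * (1 / (u + v) * x + - 1 / (u + v) * y) = (u * x + v * y + v * (x - y)) / (u+v)"
      by (simp add: add_divide_distrib diff_divide_distrib algebra_simps)
    also have "u * x + v * y + v * (x - y) = (u+v) * x" by (simp add: algebra_simps)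
    finally show ?thesis using assms by simp
  qed
  show "1 * (u / (u + v) * x + v / (u + v) * y) + - u * (1 / (u + v) * x + - 1 / (u + v) * y) = y"
  proof -
    have "1 * (u / (u + v) * x + v / (u + v) * y) + - u * (1 / (u + v) * x + - 1 / (u + v) * y) = (u * x + v * y - u * (x - y)) / (u+v)"
      by (simp add: add_divide_distrib diff_divide_distrib algebra_simps)
    also have "u * x + v * y - u * (x - y) = (u+v) * y" by (simp add: algebra_simps)
    finally show ?thesis using assms by simp
  qed
qed

lemma iso_sq1:
  fixes a :: "'a::field"
  assumes "a \<noteq> 0"
  shows "isometric [a^2] [1]"
proof -
  have A: "mat_apply (Suc 0) (\<lambda>i j. c) x = (\<lambda>i. c * x 0)" for c :: 'a and x
    unfolding mat_apply_def by simp
  have dq: "diag_qf [b] x = b * (x 0)^2" for b :: 'a and x unfolding diag_qf_def by simp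
  show ?thesis
    by (rule isometric_I[where M="\<lambda>i j. a" and N="\<lambda>i j. 1/a"])
       (use assms in \<open>auto simp: A dq power_mult_distrib\<close>)
qed

lemma pfister:
  fixes \<alpha> :: "'a::field" and f :: "nat \<Rightarrow> 'a"
  shows "\<alpha> \<noteq> 0 \<Longrightarrow> \<alpha> = (\<Sum>i<2^n. (f i)^2) \<Longrightarrow> isometric (replicate (2^n) \<alpha>) (replicate (2^n) 1)"
proof (induction n arbitrary: \<alpha> f)
  case 0
  then have "f 0 \<noteq> 0" by auto
  then show ?case using iso_sq1[of "f 0"] 0 by simp
next
  case (Suc n)
  define m :: nat where "m = 2^n"
  define R where "R = (\<lambda>x::'a. replicate m x)"
  define u where "u = (\<Sum>i<m. (f i)^2)"
  define v where "v = (\<Sum>i<m. (f (m+i))^2)"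
  have m2: "(2::nat)^Suc n = m + m" using m_def by simp
  have al: "\<alpha> = u + v" using Suc.prems(2) unfolding m2 u_def v_def by (simp add: sum_split)
  have goal: "isometric (R \<alpha> @ R \<alpha>) (R 1 @ R 1)"
  proof (cases "u = 0 \<or> v = 0")
    case True
    then obtain g where g: "\<alpha> = (\<Sum>i<m. (g i)^2)"
      using al u_def v_def by (metis add_0 add.right_neutral)
    have "isometric (R \<alpha>) (R 1)" using Suc.IH[OF Suc.prems(1)] g R_def m_def by simp
    then show ?thesis by (intro isometric_append)
  next
    case False
    then have u0: "u \<noteq> 0" and v0: "v \<noteq> 0" by auto
    have h1: "isometric (R u) (R 1)" using Suc.IH[OF u0] u_def R_def m_def by simp
    have h2: "isometric (R v) (R 1)" using Suc.IH[OF v0, of "\<lambda>i. f (m+i)"] v_def R_def m_def by simp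
    have "isometric (map ((*) u) (R v)) (map ((*) u) (R 1))" by (rule isometric_scale[OF h2])
    then have "isometric (R (u*v)) (R u)" unfolding R_def by simp
    then have h3: "isometric (R (u*v)) (R 1)" using h1 isometric_trans by blast
    have "isometric (map ((*) \<alpha>) (R (u*v))) (map ((*) \<alpha>) (R 1))" by (rule isometric_scale[OF h3])
    then have h4: "isometric (R (\<alpha>*(u*v))) (R \<alpha>)" unfolding R_def by simp
    have "isometric (R \<alpha> @ R \<alpha>) (R \<alpha> @ R (\<alpha>*(u*v)))"
      by (intro isometric_append isometric_refl isometric_sym[OF h4])
    also have "isometric (R \<alpha> @ R (\<alpha>*(u*v))) (concat (replicate m [\<alpha>, \<alpha>*(u*v)]))"
      unfolding R_def by (rule isometric_mset) (simp add: mset_pairs)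
    also have "isometric (concat (replicate m [\<alpha>, \<alpha>*(u*v)])) (concat (replicate m [u, v]))"
    proof -
      have "isometric [u,v] [\<alpha>, \<alpha>*(u*v)]"
      proof -
        have e: "u*v*(u+v) = \<alpha>*(u*v)" using al by (simp add: mult.commute)
        have "isometric [u,v] [u+v, u*v*(u+v)]" using iso_u_v[of u v] Suc.prems(1) al by simp
        then have "isometric [u,v] [u+v, \<alpha>*(u*v)]" by (simp only: e)
        then show ?thesis using al by simp
      qed
      then show ?thesis by (rule iso_rep_pair[OF isometric_sym])
    qed
    also have "isometric (concat (replicate m [u, v])) (R u @ R v)"
      unfolding R_def by (rule isometric_mset) (simp add: mset_pairs)
    also have "isometric (R u @ R v) (R 1 @ R 1)" by (intro isometric_append h1 h2)
    finally show ?thesis .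
  qed
  show ?case using goal unfolding m2 R_def by (simp add: replicate_add)
qed



lemma backward:
  fixes \<alpha> :: "'a::field"
  assumes "\<alpha> \<noteq> 0" "sum_of_squares \<alpha>" and two: "(2::'a) \<noteq> 0"
  shows "\<exists>a b::nat. a > 0 \<and> b > 0 \<and> gw_eq (replicate a 1) (concat (replicate b [2, 2 * \<alpha>]))"
proof -
  obtain xs where xs: "xs \<noteq> []" "\<alpha> = sum_list (map (\<lambda>x. x^2) xs)"
    using assms(2) unfolding sum_of_squares_def by blast
  define L where "L = length xs"
  define m :: nat where "m = 2^L"
  define f where "f = (\<lambda>i. if i < L then xs ! i else 0)"
  have Lm: "m = L + (m - L)" using less_exp[of L] m_def by simp
  have "\<alpha> = (\<Sum>i<L. (xs ! i)^2)"
    using xs(2) unfolding L_def by (simp add: sum_list_sum_nth atLeast0LessThan)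
  also have "\<dots> = (\<Sum>i<L. (f i)^2) + (\<Sum>i<m-L. (f (L+i))^2)"
    unfolding f_def by simp
  also have "\<dots> = (\<Sum>i<m. (f i)^2)" by (subst Lm) (simp only: sum_split)
  finally have "isometric (replicate m \<alpha>) (replicate m 1)"
    using pfister[OF assms(1)] m_def by simp
  then have h: "isometric (replicate m 1) (replicate m \<alpha>)" by (rule isometric_sym)
  have "isometric (replicate (2*m) 1) (concat (replicate m [1,1]))"
    by (rule isometric_mset) (simp add: mset_pairs mult_2 replicate_add)
  also have "isometric (concat (replicate m [1,1])) (concat (replicate m [2,2::'a]))"
    by (rule iso_rep_pair) (use iso_u_v[of "1::'a" 1] two in simp)
  also have "isometric (concat (replicate m [2,2::'a])) (replicate m 2 @ replicate m 2)"
    by (rule isometric_mset) (simp add: mset_pairs)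
  also have "isometric (replicate m 2 @ replicate m (2::'a)) (replicate m 2 @ replicate m (2*\<alpha>))"
  proof (rule isometric_append[OF isometric_refl])
    show "isometric (replicate m (2::'a)) (replicate m (2*\<alpha>))"
      using isometric_scale[OF h, of 2] by simp
  qed
  also have "isometric (replicate m 2 @ replicate m (2*\<alpha>)) (concat (replicate m [2, 2*\<alpha>]))"
    by (rule isometric_mset) (simp add: mset_pairs)
  finally have "isometric (replicate (2*m) 1) (concat (replicate m [2, 2*\<alpha>]))" .
  then have "gw_eq (replicate (2*m) 1) (concat (replicate m [2, 2*\<alpha>]))"
    unfolding gw_eq_def by (intro exI[of _ "[]"]) simp
  moreover have "m > 0" using m_def by simp
  ultimately show ?thesis by (intro exI[of _ "2*m"] exI[of _ m]) simp
qed



definition bil :: "'a::field list \<Rightarrow> (nat \<Rightarrow> 'a) \<Rightarrow> (nat \<Rightarrow> 'a) \<Rightarrow> 'a" where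
  "bil D x y = (\<Sum>i<length D. D ! i * x i * y i)"

lemma qf_bil: "diag_qf D x = bil D x x"
  unfolding diag_qf_def bil_def by (simp add: power2_eq_square mult.assoc)

lemma bil_sym: "bil D x y = bil D y x"
  unfolding bil_def by (simp add: ac_simps)

lemma bil_cong: "(\<And>j. j < length D \<Longrightarrow> x j = x' j) \<Longrightarrow> (\<And>j. j < length D \<Longrightarrow> y j = y' j) \<Longrightarrow> bil D x y = bil D x' y'"
  unfolding bil_def by (auto intro!: sum.cong)

lemma bil_add1: "bil D (\<lambda>i. y i + t * z i) w = bil D y w + t * bil D z w"
proof -
  have "bil D (\<lambda>i. y i + t * z i) w = (\<Sum>i<length D. D ! i * y i * w i + t * (D ! i * z i * w i))"
    unfolding bil_def by (rule sum.cong) (auto simp: algebra_simps)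
  then show ?thesis unfolding bil_def by (simp add: sum.distrib sum_distrib_left)
qed

lemma qf_add: "diag_qf D (\<lambda>i. y i + t * z i) = diag_qf D y + 2 * t * bil D y z + t^2 * diag_qf D z"
proof -
  have "diag_qf D (\<lambda>i. y i + t * z i) = bil D y (\<lambda>i. y i + t * z i) + t * bil D z (\<lambda>i. y i + t * z i)"
    unfolding qf_bil bil_add1 ..
  also have "\<dots> = bil D y y + t * bil D y z + t * (bil D z y + t * bil D z z)"
    by (simp add: bil_sym[of D _ "\<lambda>i. y i + t * z i"] bil_add1 bil_sym[of D z y])
  finally show ?thesis by (simp add: qf_bil bil_sym[of D z y] algebra_simps power2_eq_square)
qed

lemma mat_apply_add: "mat_apply n M (\<lambda>i. x i + t * y i) = (\<lambda>i. mat_apply n M x i + t * mat_apply n M y i)"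
  unfolding mat_apply_def by (simp add: algebra_simps sum.distrib sum_distrib_left)

lemma mat_apply_smult: "mat_apply n M (\<lambda>i. t * y i) = (\<lambda>i. t * mat_apply n M y i)"
  using mat_apply_add[of n M "\<lambda>i. 0" t y] unfolding mat_apply_def by simp

lemma iso_bil:
  fixes D1 D2 :: "'a::field list"
  assumes two: "(2::'a) \<noteq> 0" and iso: "\<And>x. diag_qf D2 (mat_apply n M x) = diag_qf D1 x"
  shows "bil D2 (mat_apply n M x) (mat_apply n M y) = bil D1 x y"
proof -
  have "2 * bil D2 (mat_apply n M x) (mat_apply n M y)
     = diag_qf D2 (mat_apply n M (\<lambda>i. x i + 1 * y i)) - diag_qf D2 (mat_apply n M x) - diag_qf D2 (mat_apply n M y)"
    unfolding mat_apply_add qf_add by simp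
  also have "\<dots> = 2 * bil D1 x y" unfolding iso qf_add by simp
  finally show ?thesis using two by simp
qed

lemma bil_e: "length A = n \<Longrightarrow> bil (A@[c]) y (\<lambda>i. if i = n then t else 0) = c * t * y n"
  unfolding bil_def by (simp add: nth_append)

lemma qf_last: "length A = n \<Longrightarrow> diag_qf (A@[c]) y = diag_qf A y + c * (y n)^2"
  unfolding diag_qf_def by (simp add: nth_append)

lemma hyper:
  fixes A B :: "'a::field list"
  assumes LB: "length B = n" and LA: "length A = n" and c: "c \<noteq> 0" and eps: "\<epsilon> \<noteq> 0" and two: "(2::'a) \<noteq> 0"
    and iso: "\<And>x. diag_qf (B@[c]) (mat_apply (Suc n) N x) = diag_qf (A@[c]) x"
    and Ne: "\<And>i. i < Suc n \<Longrightarrow> mat_apply (Suc n) N (\<lambda>i. if i = n then 1 else 0) i = (if i = n then \<epsilon> else 0)"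
    and x: "x n = 0"
  shows "mat_apply (Suc n) N x n = 0"
proof -
  have "bil (B@[c]) (mat_apply (Suc n) N x) (mat_apply (Suc n) N (\<lambda>i. if i = n then 1 else 0))
      = bil (A@[c]) x (\<lambda>i. if i = n then 1 else 0)" by (rule iso_bil[OF two iso])
  also have "\<dots> = 0" using bil_e[OF LA] x by simp
  finally have "bil (B@[c]) (mat_apply (Suc n) N x) (\<lambda>i. if i = n then \<epsilon> else 0) = 0"
    using Ne LB by (subst (asm) bil_cong[where x'="mat_apply (Suc n) N x" and y'="\<lambda>i. if i = n then \<epsilon> else 0"]) auto
  then show ?thesis using bil_e[OF LB] c eps by simp
qed

lemma restrict:
  fixes A B :: "'a::field list"
  assumes LA: "length A = n" and LB: "length B = n"
    and iso: "\<And>x. diag_qf (B@[c]) (mat_apply (Suc n) N x) = diag_qf (A@[c]) x"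
    and NP: "\<And>x i. i < Suc n \<Longrightarrow> mat_apply (Suc n) N (mat_apply (Suc n) P x) i = x i"
    and PN: "\<And>x i. i < Suc n \<Longrightarrow> mat_apply (Suc n) P (mat_apply (Suc n) N x) i = x i"
    and hN: "\<And>x. x n = 0 \<Longrightarrow> mat_apply (Suc n) N x n = 0"
    and hP: "\<And>x. x n = 0 \<Longrightarrow> mat_apply (Suc n) P x n = 0"
  shows "isometric A B"
proof -
  define ext :: "(nat \<Rightarrow> 'a) \<Rightarrow> nat \<Rightarrow> 'a" where "ext = (\<lambda>x i. if i = n then 0 else x i)"
  have key: "mat_apply n K x = mat_apply (Suc n) K (ext x)" for K :: "nat \<Rightarrow> nat \<Rightarrow> 'a" and x
  proof -
    have "mat_apply (Suc n) K (ext x) = mat_apply n K (ext x)"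
      unfolding mat_apply_def ext_def by (simp add: fun_eq_iff)
    also have "\<dots> = mat_apply n K x" by (rule mat_apply_cong) (simp add: ext_def)
    finally show ?thesis by simp
  qed
  have inv: "mat_apply n K (mat_apply n L x) i = x i"
    if hL: "\<And>x. x n = 0 \<Longrightarrow> mat_apply (Suc n) L x n = 0"
      and KL: "\<And>x i. i < Suc n \<Longrightarrow> mat_apply (Suc n) K (mat_apply (Suc n) L x) i = x i"
      and i: "i < n" for K L :: "nat \<Rightarrow> nat \<Rightarrow> 'a" and x :: "nat \<Rightarrow> 'a" and i
  proof -
    have "mat_apply n K (mat_apply n L x) i = mat_apply (Suc n) K (ext (mat_apply n L x)) i"
      by (simp add: key)
    also have "ext (mat_apply n L x) = ext (mat_apply (Suc n) L (ext x))" by (simp add: key)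
    also have "mat_apply (Suc n) K (ext (mat_apply (Suc n) L (ext x))) = mat_apply (Suc n) K (mat_apply (Suc n) L (ext x))"
      by (rule mat_apply_cong) (auto simp: ext_def hL less_Suc_eq)
    also have "\<dots> i = ext x i" using KL i by simp
    also have "\<dots> = x i" using i by (simp add: ext_def)
    finally show ?thesis .
  qed
  have d: "diag_qf B (mat_apply n N x) = diag_qf A x" for x
  proof -
    have "diag_qf B (mat_apply n N x) = diag_qf (B@[c]) (mat_apply (Suc n) N (ext x))"
      using qf_last[OF LB] hN[of "ext x"] by (simp add: key ext_def)
    also have "\<dots> = diag_qf (A@[c]) (ext x)" by (rule iso)
    also have "\<dots> = diag_qf A x" using qf_last[OF LA] LA
      by (simp add: ext_def) (rule diag_qf_cong, simp)
    finally show ?thesis .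
  qed
  show ?thesis
    by (rule isometric_I[where M=N and N=P]) (use LA LB d inv[OF hP NP] inv[OF hN PN] in auto)
qed



lemma cancel1:
  fixes A B :: "'a::field list"
  assumes two: "(2::'a) \<noteq> 0" and c: "c \<noteq> 0" and I: "isometric (A@[c]) (B@[c])"
  shows "isometric A B"
proof -
  define n where "n = length A"
  define n1 where "n1 = Suc n"
  define D1 where "D1 = A@[c]"
  define D2 where "D2 = B@[c]"
  obtain M Mi where L: "length D2 = n1"
    and m1: "\<And>x i. i < n1 \<Longrightarrow> mat_apply n1 M (mat_apply n1 Mi x) i = x i"
    and m2: "\<And>x i. i < n1 \<Longrightarrow> mat_apply n1 Mi (mat_apply n1 M x) i = x i"
    and m3: "\<And>x. diag_qf D2 (mat_apply n1 M x) = diag_qf D1 x"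
    using isometric_E[OF I] unfolding n1_def n_def D1_def D2_def by (metis length_append_singleton)
  have LA: "length A = n" using n_def by simp
  have LB: "length B = n" using L D2_def n1_def by simp
  have L1: "length D1 = n1" using D1_def n1_def n_def by simp
  define e :: "nat \<Rightarrow> 'a" where "e = (\<lambda>i. if i = n then 1 else 0)"
  have Qe1: "diag_qf D1 e = c" unfolding qf_bil D1_def e_def using bil_e[OF LA] by simp
  have Qe2: "diag_qf D2 e = c" unfolding qf_bil D2_def e_def using bil_e[OF LB] by simp
  define w where "w = mat_apply n1 M e"
  have Qw: "diag_qf D2 w = c" unfolding w_def m3 Qe1 ..
  define \<beta> where "\<beta> = bil D2 w e"
  have Qwe: "diag_qf D2 (\<lambda>i. w i + t * e i) = 2 * c + 2 * t * \<beta>" if "t * t = 1" for t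
    unfolding qf_add Qw Qe2 \<beta>_def using that by (simp add: power2_eq_square algebra_simps)
  obtain \<epsilon> :: 'a where eps1: "\<epsilon> * \<epsilon> = 1" and Qz0: "diag_qf D2 (\<lambda>i. w i + (-\<epsilon>) * e i) \<noteq> 0"
  proof (cases "diag_qf D2 (\<lambda>i. w i + (-1) * e i) = 0")
    case True
    have "diag_qf D2 (\<lambda>i. w i + 1 * e i) = diag_qf D2 (\<lambda>i. w i + 1 * e i) + diag_qf D2 (\<lambda>i. w i + (-1) * e i)"
      using True by simp
    also have "\<dots> = 2 * (2 * c)" using Qwe[of 1] Qwe[of "-1"] by (simp add: algebra_simps)
    moreover have "(4::'a) \<noteq> 0"
    proof -
      have h: "(4::'a) = 2 * 2" by simp
      have h2: "(2::'a) * 2 \<noteq> 0" using two by (metis mult_eq_0_iff)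
      show ?thesis using h h2 by metis
    qed
    ultimately have "diag_qf D2 (\<lambda>i. w i + (- (-1)) * e i) \<noteq> 0" using c by simp
    then show ?thesis using that[of "-1"] by simp
  next
    case False then show ?thesis using that[of 1] by simp
  qed
  define z where "z = (\<lambda>i. w i + (-\<epsilon>) * e i)"
  define Qz where "Qz = diag_qf D2 z"
  have Qz0': "Qz \<noteq> 0" using Qz0 unfolding Qz_def z_def .
  have Bwz: "Qz = 2 * bil D2 w z"
  proof -
    have "bil D2 w z = bil D2 z w" by (rule bil_sym)
    also have "\<dots> = bil D2 w w + (-\<epsilon>) * bil D2 e w" unfolding z_def by (rule bil_add1)
    also have "bil D2 e w = \<beta>" unfolding \<beta>_def by (rule bil_sym)
    also have "bil D2 w w = c" using Qw by (simp only: qf_bil)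
    finally have b1: "bil D2 w z = c + (-\<epsilon>) * \<beta>" .
    have b2: "Qz = diag_qf D2 w + 2 * (-\<epsilon>) * \<beta> + (-\<epsilon>)^2 * c"
      unfolding Qz_def z_def qf_add \<beta>_def Qe2 ..
    have e2: "(-\<epsilon>)^2 = 1" using eps1 by (simp add: power2_eq_square)
    show ?thesis unfolding b1 b2 e2 Qw by (simp add: algebra_simps)
  qed
  define \<sigma> where "\<sigma> = (\<lambda>y i. y i + (- (2 * bil D2 y z / Qz)) * z i)"
  define S where "S = (\<lambda>i j. (if i = j then 1 else 0) + (- 2 * z i / Qz) * (D2 ! j * z j))"
  have AS: "mat_apply n1 S y i = \<sigma> y i" if i: "i < n1" for y i
  proof -
    define k where "k = - 2 * z i / Qz"
    have "mat_apply n1 S y i = (\<Sum>j<n1. (if i = j then y j else 0) + k * (D2 ! j * y j * z j))"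
      unfolding mat_apply_def S_def k_def by (rule sum.cong) (auto simp: algebra_simps)
    also have "\<dots> = (\<Sum>j<n1. (if i = j then y j else 0)) + k * (\<Sum>j<n1. D2 ! j * y j * z j)"
      by (simp only: sum.distrib sum_distrib_left)
    also have "\<dots> = y i + k * bil D2 y z"
      using i L by (simp add: bil_def)
    finally show ?thesis unfolding \<sigma>_def k_def by (simp add: algebra_simps)
  qed
  have Qs: "diag_qf D2 (\<sigma> y) = diag_qf D2 y" for y
    unfolding \<sigma>_def qf_add Qz_def[symmetric] using Qz0'
    by (simp add: power2_eq_square field_simps)
  have Bs: "bil D2 (\<sigma> y) z = - bil D2 y z" for y
    unfolding \<sigma>_def bil_add1 qf_bil[symmetric] Qz_def[symmetric] using Qz0' by (simp add: field_simps)
  have ss: "\<sigma> (\<sigma> y) = y" for y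
    using Bs[of y] unfolding \<sigma>_def by (simp add: fun_eq_iff algebra_simps)
  have sw: "\<sigma> w = (\<lambda>i. \<epsilon> * e i)"
  proof -
    have "2 * bil D2 w z / Qz = 1" using Bwz Qz0' by simp
    then show ?thesis unfolding \<sigma>_def z_def by (simp add: fun_eq_iff)
  qed
  have SS: "mat_apply n1 S (mat_apply n1 S y) i = y i" if "i < n1" for y i
  proof -
    have "mat_apply n1 S (mat_apply n1 S y) = mat_apply n1 S (\<sigma> y)"
      by (rule mat_apply_cong) (simp add: AS)
    then show ?thesis using AS[OF that] ss by simp
  qed
  define N where "N = mmul n1 S M"
  define P where "P = mmul n1 Mi S"
  have AN: "mat_apply n1 N x i = \<sigma> (mat_apply n1 M x) i" if "i < n1" for x i
    unfolding N_def mat_apply_comp[symmetric] using AS[OF that] .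
  have isoN: "diag_qf D2 (mat_apply n1 N x) = diag_qf D1 x" for x
  proof -
    have "diag_qf D2 (mat_apply n1 N x) = diag_qf D2 (\<sigma> (mat_apply n1 M x))"
      by (rule diag_qf_cong) (simp add: L AN)
    then show ?thesis using Qs m3 by simp
  qed
  have NP: "mat_apply n1 N (mat_apply n1 P x) i = x i" if "i < n1" for x i
  proof -
    have "mat_apply n1 N (mat_apply n1 P x) = mat_apply n1 S (mat_apply n1 M (mat_apply n1 Mi (mat_apply n1 S x)))"
      by (simp only: N_def P_def mat_apply_comp[symmetric])
    also have "\<dots> = mat_apply n1 S (mat_apply n1 S x)" by (rule mat_apply_cong) (rule m1)
    finally show ?thesis using SS that by simp
  qed
  have PN: "mat_apply n1 P (mat_apply n1 N x) i = x i" if "i < n1" for x i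
  proof -
    have "mat_apply n1 P (mat_apply n1 N x) = mat_apply n1 Mi (mat_apply n1 S (mat_apply n1 S (mat_apply n1 M x)))"
      by (simp only: N_def P_def mat_apply_comp[symmetric])
    also have "\<dots> = mat_apply n1 Mi (mat_apply n1 M x)" by (rule mat_apply_cong) (rule SS)
    finally show ?thesis using m2 that by simp
  qed
  have isoP: "diag_qf D1 (mat_apply n1 P y) = diag_qf D2 y" for y
  proof -
    have "diag_qf D1 (mat_apply n1 P y) = diag_qf D2 (mat_apply n1 N (mat_apply n1 P y))" using isoN by simp
    also have "\<dots> = diag_qf D2 y" by (rule diag_qf_cong) (simp add: L NP)
    finally show ?thesis .
  qed
  have eps0: "\<epsilon> \<noteq> 0" using eps1 by auto
  have Ne: "mat_apply n1 N e i = (if i = n then \<epsilon> else 0)" if "i < n1" for i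
  proof -
    have "mat_apply n1 N e i = \<sigma> w i" using AN[OF that] unfolding w_def .
    also have "\<dots> = \<epsilon> * e i" using sw by simp
    finally show ?thesis by (simp add: e_def)
  qed
  have Pe: "mat_apply n1 P e i = (if i = n then 1/\<epsilon> else 0)" if i: "i < n1" for i
  proof -
    have "mat_apply n1 P (mat_apply n1 N e) = mat_apply n1 P (\<lambda>i. \<epsilon> * e i)"
      by (rule mat_apply_cong) (simp add: Ne[unfolded e_def] e_def)
    then have "e i = \<epsilon> * mat_apply n1 P e i" using PN[OF i, of e] by (simp add: mat_apply_smult)
    then show ?thesis using eps0 by (auto simp: e_def field_simps)
  qed
  have hN: "mat_apply n1 N x n = 0" if "x n = 0" for x
    unfolding n1_def by (rule hyper[OF LB LA c eps0 two, of N]) (use isoN Ne that in \<open>simp_all add: D1_def D2_def n1_def e_def\<close>)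
  have hP: "mat_apply n1 P x n = 0" if "x n = 0" for x
    unfolding n1_def by (rule hyper[OF LA LB c _ two, of "1/\<epsilon>" P]) (use eps0 isoP Pe that in \<open>simp_all add: D1_def D2_def n1_def e_def\<close>)
  show ?thesis
    by (rule restrict[OF LA LB, of c N P]) (use isoN NP PN hN hP in \<open>simp_all add: D1_def D2_def n1_def\<close>)
qed

lemma cancel:
  fixes A B :: "'a::field list"
  assumes two: "(2::'a) \<noteq> 0"
  shows "(\<forall>c\<in>set cs. c \<noteq> 0) \<Longrightarrow> isometric (A@cs) (B@cs) \<Longrightarrow> isometric A B"
proof (induction cs rule: rev_induct)
  case Nil then show ?case by simp
next
  case (snoc c cs)
  have "isometric (A@cs) (B@cs)" by (rule cancel1[OF two, of c]) (use snoc.prems in auto)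
  then show ?case using snoc by simp
qed



lemma diag_unit: "j < length D \<Longrightarrow> diag_qf D (\<lambda>i. if i = j then 1 else 0) = D ! j"
proof -
  assume j: "j < length D"
  have "diag_qf D (\<lambda>i. if i = j then 1 else 0) = (\<Sum>i<length D. if i = j then D ! i else 0)"
    unfolding diag_qf_def by (rule sum.cong) auto
  also have "\<dots> = D ! j" using j by simp
  finally show ?thesis .
qed

lemma diag_ones: "diag_qf (replicate a 1) y = (\<Sum>i<a. (y i)^2)"
  unfolding diag_qf_def by simp

lemma sum_filter_sq: "sum_list (map (\<lambda>x. x^2) (filter (\<lambda>x. x \<noteq> 0) L)) = sum_list (map (\<lambda>x. (x::'a::field)^2) L)"
  by (induction L) auto

lemma sum_pairs: "sum_list (map (\<lambda>x. x^2) (concat (map (\<lambda>i. [t i, t i]) [0..<a]))) = (\<Sum>i<a. 2 * ((t i)::'a::field)^2)"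
  by (induction a) auto

lemma forward:
  fixes \<alpha> :: "'a::field"
  assumes two: "(2::'a) \<noteq> 0" and a0: "\<alpha> \<noteq> 0" and b: "b > 0"
    and g: "gw_eq (replicate a 1) (concat (replicate b [2, 2 * \<alpha>]))"
  shows "sum_of_squares \<alpha>"
proof -
  define bs where "bs = concat (replicate b [2, 2 * \<alpha>])"
  obtain cs where cs: "\<forall>c\<in>set cs. c \<noteq> 0" "isometric (replicate a 1 @ cs) (bs @ cs)"
    using g unfolding gw_eq_def bs_def by blast
  have "isometric (replicate a 1) bs" by (rule cancel[OF two cs])
  then have I: "isometric bs (replicate a 1)" by (rule isometric_sym)
  obtain M where L: "length bs = a" and iso: "\<And>x. diag_qf (replicate a 1) (mat_apply (length bs) M x) = diag_qf bs x"
    using isometric_E[OF I] by (metis length_replicate)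
  obtain b' where b': "b = Suc b'" using b by (cases b) auto
  have bs1: "bs ! 1 = 2 * \<alpha>" and lb: "1 < length bs" unfolding bs_def b' by simp_all
  define y where "y = mat_apply (length bs) M (\<lambda>i. if i = 1 then 1 else 0)"
  have "2 * \<alpha> = (\<Sum>i<a. (y i)^2)"
    using iso[of "\<lambda>i. if i = 1 then 1 else 0"] diag_unit[OF lb] bs1 unfolding y_def diag_ones by simp
  define t where "t = (\<lambda>i. y i / 2)"
  have f4: "(4::'a) \<noteq> 0"
  proof -
    have h: "(4::'a) = 2 * 2" by simp
    have h2: "(2::'a) * 2 \<noteq> 0" using two by (metis mult_eq_0_iff)
    show ?thesis using h h2 by metis
  qed
  have "(\<Sum>i<a. 2 * (t i)^2) = (\<Sum>i<a. (y i)^2) / 2"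
    unfolding t_def sum_divide_distrib by (rule sum.cong) (use f4 two in \<open>auto simp: power_divide power2_eq_square field_simps\<close>)
  also have "\<dots> = \<alpha>" using \<open>2 * \<alpha> = _\<close>[symmetric] two by simp
  finally have al: "\<alpha> = sum_list (map (\<lambda>x. x^2) (filter (\<lambda>x. x \<noteq> 0) (concat (map (\<lambda>i. [t i, t i]) [0..<a]))))"
    unfolding sum_filter_sq sum_pairs by simp
  show ?thesis unfolding sum_of_squares_def
  proof (intro exI conjI)
    show "filter (\<lambda>x. x \<noteq> 0) (concat (map (\<lambda>i. [t i, t i]) [0..<a])) \<noteq> []"
    proof
      assume "filter (\<lambda>x. x \<noteq> 0) (concat (map (\<lambda>i. [t i, t i]) [0..<a])) = []"
      then show False using al a0 by simp
    qed
  qed (use al in auto)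
qed

theorem lemma2p4:
  fixes \<alpha> :: "'a::field"
  assumes "(2::'a) \<noteq> 0" and "\<alpha> \<noteq> 0"
  shows "(\<exists>a b::nat. a > 0 \<and> b > 0 \<and>
            gw_eq (replicate a 1) (concat (replicate b [2, 2 * \<alpha>])))
         \<longleftrightarrow> sum_of_squares \<alpha>"
  using forward[OF assms] backward[OF assms(2) _ assms(1)] by blast


end
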